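(* Let $F,H_1,\dots,H_m,G_1,\dots,G_n,F_{i,j}$ ($1\le i\le m$, $1\le j\le n$) be constant real symmetric $p\times p$ matrices and define $\mathcal{B}(\mathbf{x},\mathbf{y})=F+\sum_{i=1}^m x_iH_i+\sum_{j=1}^n y_jG_j+\sum_{i=1}^m\sum_{j=1}^n x_iy_jF_{i,j}$ for $\mathbf{x}\in\mathbb{R}^m,\mathbf{y}\in\mathbb{R}^n$. Let $\Gamma=\tfrac12(F_{i,j})_{i,j}$ be the $mp\times np$ block matrix with $(i,j)$ block $\tfrac12F_{i,j}$, $\Omega_1=(H_1\ \cdots\ H_m)$, $\Omega_2=(G_1\ \cdots\ G_n)$, and $M=\begin{pmatrix}0&\Gamma\\ \Gamma^{\mathsf T}&0\end{pmatrix}\in\mathcal{S}^{(m+n)p}$. Let $M=V^{\mathsf T}DV$ be an eigendecomposition with $V$ orthogonal and $D$ diagonal, let $D^+$ be obtained from $D$ by replacing negative entries with $0$, $D^-=D^+-D$, $M_1=V^{\mathsf T}D^+V$, $M_2=V^{\mathsf T}D^-V$. With $\mathbf{w}=\begin{pmatrix}\mathbf{x}\otimes I\\ \mathbf{y}\otimes I\end{pmatrix}$ ($I$ the $p\times p$ identity, $\mathbf{x},\mathbf{y}$ column vectors), define $\mathcal{B}^+(\mathbf{x},\mathbf{y})=\mathbf{w}^{\mathsf T}M_1\mathbf{w}+(\Omega_1\ \Omega_2)\mathbf{w}+F$ and $\mathcal{B}^-(\mathbf{x},\mathbf{y})=\mathbf{w}^{\mathsf T}M_2\mathbf{w}$.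 Then $\mathcal{B}(\mathbf{x},\mathbf{y})=\mathcal{B}^+(\mathbf{x},\mathbf{y})-\mathcal{B}^-(\mathbf{x},\mathbf{y})$ for all $(\mathbf{x},\mathbf{y})$, and both $\mathcal{B}^+$ and $\mathcal{B}^-$ are psd-convex on $\mathbb{R}^{m+n}$.
   Context: $\mathcal{S}^k$ is the space of real symmetric $k\times k$ matrices; $A\preceq B$ means $B-A$ is positive semidefinite. $\otimes$ is the Kronecker product. A matrix-valued function $\mathcal{C}\colon\mathbb{R}^N\to\mathcal{S}^p$ is psd-convex on a convex set $K$ if $\mathcal{C}(\mu\mathbf{z}_1+(1-\mu)\mathbf{z}_2)\preceq\mu\mathcal{C}(\mathbf{z}_1)+(1-\mu)\mathcal{C}(\mathbf{z}_2)$ for all $\mathbf{z}_1,\mathbf{z}_2\in K$, $\mu\in(0,1)$. *)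

theory Defs
  imports "HOL-Analysis.Analysis"
begin

text \<open>Block matrices of size
  (m+n)p are indexed by the type ('m + 'n) \<times> 'p, where the index (Inl i, a)
  is row a of block i (first group) and (Inr j, a) row a of block j (second group).\<close>

definition symmetric_mat :: "real^'k::finite^'k::finite \<Rightarrow> bool" where
  "symmetric_mat A \<longleftrightarrow> transpose A = A"

definition psd :: "real^'k::finite^'k::finite \<Rightarrow> bool" where
  "psd A \<longleftrightarrow> symmetric_mat A \<and> (\<forall>v. 0 \<le> v \<bullet> (A *v v))"

definition psd_le :: "real^'k::finite^'k::finite \<Rightarrow> real^'k::finite^'k::finite \<Rightarrow> bool" where
  "psd_le A B \<longleftrightarrow> psd (B - A)"

definition psd_convex_on :: "'a::real_vector set \<Rightarrow> ('a \<Rightarrow> real^'k::finite^'k::finite) \<Rightarrow> bool" where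
  "psd_convex_on K C \<longleftrightarrow> (\<forall>z1\<in>K. \<forall>z2\<in>K. \<forall>\<mu>::real. 0 < \<mu> \<and> \<mu> < 1 \<longrightarrow>
      psd_le (C (\<mu> *\<^sub>R z1 + (1 - \<mu>) *\<^sub>R z2)) (\<mu> *\<^sub>R C z1 + (1 - \<mu>) *\<^sub>R C z2))"

definition Bfun :: "real^'p::finite^'p::finite \<Rightarrow> ('m::finite \<Rightarrow> real^'p::finite^'p::finite) \<Rightarrow> ('n::finite \<Rightarrow> real^'p::finite^'p::finite)
     \<Rightarrow> ('m::finite \<Rightarrow> 'n::finite \<Rightarrow> real^'p::finite^'p::finite) \<Rightarrow> real^'m::finite \<Rightarrow> real^'n::finite \<Rightarrow> real^'p::finite^'p::finite" where
  "Bfun F H G Fm x y = F + (\<Sum>i\<in>UNIV. (x$i) *\<^sub>R H i) + (\<Sum>j\<in>UNIV. (y$j) *\<^sub>R G j)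
      + (\<Sum>i\<in>UNIV. \<Sum>j\<in>UNIV. (x$i * y$j) *\<^sub>R Fm i j)"

definition Gamma :: "('m::finite \<Rightarrow> 'n::finite \<Rightarrow> real^'p::finite^'p::finite) \<Rightarrow> real^('n::finite \<times> 'p::finite)^('m::finite \<times> 'p::finite)" where
  "Gamma Fm = (\<chi> r c. (1/2) * (Fm (fst r) (fst c) $ snd r $ snd c))"

definition Mmat :: "('m::finite \<Rightarrow> 'n::finite \<Rightarrow> real^'p::finite^'p::finite) \<Rightarrow> real^(('m::finite + 'n::finite) \<times> 'p::finite)^(('m::finite + 'n::finite) \<times> 'p::finite)" where
  "Mmat Fm = (\<chi> r c. case (r, c) of
       ((Inl i, a), (Inr j, b)) \<Rightarrow> Gamma Fm $ (i,a) $ (j,b)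
     | ((Inr j, a), (Inl i, b)) \<Rightarrow> transpose (Gamma Fm) $ (j,a) $ (i,b)
     | _ \<Rightarrow> 0)"

definition Omega :: "('m::finite \<Rightarrow> real^'p::finite^'p::finite) \<Rightarrow> ('n::finite \<Rightarrow> real^'p::finite^'p::finite) \<Rightarrow> real^(('m::finite + 'n::finite) \<times> 'p::finite)^'p::finite" where
  "Omega H G = (\<chi> a c. case c of (Inl i, b) \<Rightarrow> H i $ a $ b | (Inr j, b) \<Rightarrow> G j $ a $ b)"

definition wmat :: "real^'m::finite \<Rightarrow> real^'n::finite \<Rightarrow> real^'p::finite^(('m::finite + 'n::finite) \<times> 'p::finite)" where
  "wmat x y = (\<chi> r b. case r of
       (Inl i, a) \<Rightarrow> x$i * (if a = b then 1 else 0)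
     | (Inr j, a) \<Rightarrow> y$j * (if a = b then 1 else 0))"

definition Dplus :: "real^'k::finite^'k::finite \<Rightarrow> real^'k::finite^'k::finite" where
  "Dplus D = (\<chi> i j. if i = j then max (D$i$j) 0 else D$i$j)"

definition Dminus :: "real^'k::finite^'k::finite \<Rightarrow> real^'k::finite^'k::finite" where
  "Dminus D = Dplus D - D"

definition Bplus :: "real^'p::finite^'p::finite \<Rightarrow> ('m::finite \<Rightarrow> real^'p::finite^'p::finite) \<Rightarrow> ('n::finite \<Rightarrow> real^'p::finite^'p::finite)
     \<Rightarrow> real^(('m::finite + 'n::finite) \<times> 'p::finite)^(('m::finite + 'n::finite) \<times> 'p::finite) \<Rightarrow> real^(('m::finite + 'n::finite) \<times> 'p::finite)^(('m::finite + 'n::finite) \<times> 'p::finite)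
     \<Rightarrow> real^'m::finite \<Rightarrow> real^'n::finite \<Rightarrow> real^'p::finite^'p::finite" where
  "Bplus F H G V D x y =
     transpose (wmat x y) ** (transpose V ** Dplus D ** V) ** wmat x y + Omega H G ** wmat x y + F"

definition Bminus :: "real^(('m::finite + 'n::finite) \<times> 'p::finite)^(('m::finite + 'n::finite) \<times> 'p::finite) \<Rightarrow> real^(('m::finite + 'n::finite) \<times> 'p::finite)^(('m::finite + 'n::finite) \<times> 'p::finite)
     \<Rightarrow> real^'m::finite \<Rightarrow> real^'n::finite \<Rightarrow> real^'p::finite^'p::finite" where
  "Bminus V D x y = transpose (wmat x y) ** (transpose V ** Dminus D ** V) ** wmat x y"

end

theory Submission
  imports Defs
begin


lemma Q_entry: "(transpose W ** P ** W) $ a $ b = (\<Sum>r\<in>UNIV. \<Sum>c\<in>UNIV. W$r$a * P$r$c * W$c$b)"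
  for W :: "real^'p::finite^'k::finite" and P :: "real^'k^'k"
  unfolding matrix_matrix_mult_def transpose_def
  by (simp add: sum_distrib_right) (rule sum.swap)

lemma Q_diff:
  fixes W1 W2 :: "real^'p::finite^'k::finite" and P :: "real^'k^'k"
  shows "\<mu> *\<^sub>R (transpose W1 ** P ** W1) + (1-\<mu>) *\<^sub>R (transpose W2 ** P ** W2)
     - transpose (\<mu> *\<^sub>R W1 + (1-\<mu>) *\<^sub>R W2) ** P ** (\<mu> *\<^sub>R W1 + (1-\<mu>) *\<^sub>R W2)
     = (\<mu> * (1-\<mu>)) *\<^sub>R (transpose (W1 - W2) ** P ** (W1 - W2))"
proof -
  have "(\<mu> *\<^sub>R (transpose W1 ** P ** W1) + (1-\<mu>) *\<^sub>R (transpose W2 ** P ** W2)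
     - transpose (\<mu> *\<^sub>R W1 + (1-\<mu>) *\<^sub>R W2) ** P ** (\<mu> *\<^sub>R W1 + (1-\<mu>) *\<^sub>R W2)) $ a $ b
     = ((\<mu> * (1-\<mu>)) *\<^sub>R (transpose (W1 - W2) ** P ** (W1 - W2))) $ a $ b" for a b
    unfolding vector_minus_component vector_add_component vector_scaleR_component Q_entry
    by (simp add: sum_distrib_left sum_subtractf[symmetric] sum.distrib[symmetric] algebra_simps)
  then show ?thesis by (simp add: vec_eq_iff)
qed

lemma psd_Q:
  fixes W :: "real^'p::finite^'k::finite" and P :: "real^'k^'k"
  assumes "psd P"
  shows "psd (transpose W ** P ** W)"
proof -
  have s: "transpose P = P" and n: "\<And>u. 0 \<le> u \<bullet> (P *v u)" using assms unfolding psd_def symmetric_mat_def by auto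
  have "transpose (transpose W ** P ** W) = transpose W ** P ** W"
    by (simp only: matrix_transpose_mul transpose_transpose s matrix_mul_assoc)
  moreover have "0 \<le> v \<bullet> ((transpose W ** P ** W) *v v)" for v
  proof -
    have "v \<bullet> ((transpose W ** P ** W) *v v) = v \<bullet> (transpose W *v (P *v (W *v v)))"
      by (simp only: matrix_vector_mul_assoc[symmetric])
    also have "\<dots> = (W *v v) \<bullet> (P *v (W *v v))"
      by (simp only: transpose_matrix_vector inner_commute[of v] dot_lmul_matrix) (rule inner_commute)
    finally show ?thesis using n by simp
  qed
  ultimately show ?thesis unfolding psd_def symmetric_mat_def by auto
qed

lemma psd_scale: "psd A \<Longrightarrow> 0 \<le> c \<Longrightarrow> psd (c *\<^sub>R A)"
proof -
  have e: "(c *\<^sub>R A) *v v = c *\<^sub>R (A *v v)" for v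
    by (simp add: vec_eq_iff matrix_vector_mult_def sum_distrib_left mult.assoc)
  assume "psd A" "0 \<le> c"
  then show ?thesis unfolding psd_def symmetric_mat_def
    by (simp add: transpose_scalar e)
qed

lemma psd_VDV:
  fixes V D :: "real^'k::finite^'k::finite"
  assumes "\<And>r c. r \<noteq> c \<Longrightarrow> D $ r $ c = 0" "\<And>r. 0 \<le> D $ r $ r"
  shows "psd (transpose V ** D ** V)"
proof (rule psd_Q)
  have "D *v v = (\<chi> r. D$r$r * v$r)" for v
  proof -
    have "(\<Sum>j\<in>UNIV. D $ i $ j * v $ j) = (\<Sum>j\<in>UNIV. if j = i then D$i$i * v$i else 0)" for i
      by (rule sum.cong) (auto simp: assms(1))
    then show ?thesis by (simp add: vec_eq_iff matrix_vector_mult_def)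
  qed
  show "psd D" unfolding psd_def symmetric_mat_def
  proof
    show "transpose D = D" using assms(1) unfolding transpose_def by (simp add: vec_eq_iff) (metis)
    show "\<forall>v. 0 \<le> v \<bullet> (D *v v)"
    proof
      fix v :: "real^'k"
      have "0 \<le> (\<Sum>i\<in>UNIV. D $ i $ i * (v $ i * v $ i))"
        by (intro sum_nonneg mult_nonneg_nonneg assms(2) zero_le_square)
      then show "0 \<le> v \<bullet> (D *v v)"
        using \<open>\<And>v. D *v v = _\<close> by (simp add: inner_vec_def mult.left_commute)
    qed
  qed
qed

lemma wmat_lin: "wmat (a *\<^sub>R x1 + b *\<^sub>R x2) (a *\<^sub>R y1 + b *\<^sub>R y2) = a *\<^sub>R wmat x1 y1 + b *\<^sub>R wmat x2 y2"
  by (simp add: vec_eq_iff wmat_def split: sum.splits prod.splits)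

lemma Omega_lin: "Omega H G ** (a *\<^sub>R W1 + b *\<^sub>R W2) = a *\<^sub>R (Omega H G ** W1) + b *\<^sub>R (Omega H G ** W2)"
  by (simp add: matrix_add_ldistrib matrix_scalar_ac scalar_matrix_assoc)


lemma Dplus_off: "(\<And>r c. r \<noteq> c \<Longrightarrow> D $ r $ c = 0) \<Longrightarrow> r \<noteq> c \<Longrightarrow> Dplus D $ r $ c = 0"
  by (simp add: Dplus_def)
lemma Dplus_diag: "0 \<le> Dplus D $ r $ r"
  by (simp add: Dplus_def)
lemma Dminus_off: "(\<And>r c. r \<noteq> c \<Longrightarrow> D $ r $ c = 0) \<Longrightarrow> r \<noteq> c \<Longrightarrow> Dminus D $ r $ c = 0"
  by (simp add: Dminus_def Dplus_def)
lemma Dminus_diag: "0 \<le> Dminus D $ r $ r"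
  by (simp add: Dminus_def Dplus_def)

lemma convex_Q:
  fixes P :: "real^'k::finite^'k::finite" and W :: "'a::real_vector \<Rightarrow> real^'p::finite^'k"
  assumes "psd P" and lin: "\<And>a b z1 z2. W (a *\<^sub>R z1 + b *\<^sub>R z2) = a *\<^sub>R W z1 + b *\<^sub>R W z2"
    and aff: "\<And>z1 z2 \<mu>. L (\<mu> *\<^sub>R z1 + (1-\<mu>) *\<^sub>R z2) = \<mu> *\<^sub>R L z1 + (1-\<mu>) *\<^sub>R L z2"
  shows "psd_convex_on UNIV (\<lambda>z. transpose (W z) ** P ** W z + L z)"
  unfolding psd_convex_on_def psd_le_def
proof (intro ballI allI impI)
  fix z1 z2 :: 'a and \<mu> :: real
  assume "0 < \<mu> \<and> \<mu> < 1"
  then have "psd ((\<mu> * (1-\<mu>)) *\<^sub>R (transpose (W z1 - W z2) ** P ** (W z1 - W z2)))"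
    by (intro psd_scale psd_Q assms(1)) auto
  moreover have "\<mu> *\<^sub>R (transpose (W z1) ** P ** W z1 + L z1) + (1 - \<mu>) *\<^sub>R (transpose (W z2) ** P ** W z2 + L z2) -
      (transpose (W (\<mu> *\<^sub>R z1 + (1 - \<mu>) *\<^sub>R z2)) ** P ** W (\<mu> *\<^sub>R z1 + (1 - \<mu>) *\<^sub>R z2) + L (\<mu> *\<^sub>R z1 + (1 - \<mu>) *\<^sub>R z2))
    = (\<mu> * (1-\<mu>)) *\<^sub>R (transpose (W z1 - W z2) ** P ** (W z1 - W z2))"
    unfolding lin aff Q_diff[symmetric] by (simp add: algebra_simps)
  ultimately show "psd (\<mu> *\<^sub>R (transpose (W z1) ** P ** W z1 + L z1) + (1 - \<mu>) *\<^sub>R (transpose (W z2) ** P ** W z2 + L z2) -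
      (transpose (W (\<mu> *\<^sub>R z1 + (1 - \<mu>) *\<^sub>R z2)) ** P ** W (\<mu> *\<^sub>R z1 + (1 - \<mu>) *\<^sub>R z2) + L (\<mu> *\<^sub>R z1 + (1 - \<mu>) *\<^sub>R z2)))"
    by simp
qed

lemma Q_sub: "transpose W ** A ** W - transpose W ** B ** W = transpose W ** (A - B) ** W"
  for W :: "real^'p::finite^'k::finite" and A B :: "real^'k^'k"
proof -
  have "(transpose W ** A ** W - transpose W ** B ** W) $ a $ b = (transpose W ** (A - B) ** W) $ a $ b" for a b
    unfolding vector_minus_component Q_entry
    by (simp add: sum_subtractf[symmetric] left_diff_distrib right_diff_distrib)
  then show ?thesis by (simp add: vec_eq_iff)
qed

lemma sum_blk: "(\<Sum>r\<in>UNIV. f r) = (\<Sum>i\<in>UNIV. \<Sum>a\<in>UNIV. f (Inl i, a)) + (\<Sum>j\<in>UNIV. \<Sum>a\<in>UNIV. f (Inr j, a))"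
  for f :: "('m::finite + 'n::finite) \<times> 'p::finite \<Rightarrow> real"
proof -
  have "(\<Sum>r\<in>UNIV. f r) = (\<Sum>s\<in>UNIV. \<Sum>a\<in>UNIV. f (s, a))"
    by (simp add: sum.cartesian_product UNIV_Times_UNIV[symmetric] del: UNIV_Times_UNIV)
  also have "\<dots> = (\<Sum>i\<in>UNIV. \<Sum>a\<in>UNIV. f (Inl i, a)) + (\<Sum>j\<in>UNIV. \<Sum>a\<in>UNIV. f (Inr j, a))"
    by (simp add: UNIV_Plus_UNIV[symmetric] sum.Plus del: UNIV_Plus_UNIV)
  finally show ?thesis .
qed

lemma sym_entry: "symmetric_mat A \<Longrightarrow> A $ b $ a = A $ a $ b"
  unfolding symmetric_mat_def by (metis transpose_def vec_lambda_beta)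

lemma if0_simps:
  "(if P then u else 0) * v = (if P then u * v else (0::real))"
  "v * (if P then u else 0) = (if P then v * u else (0::real))"
  "(if P then u else 0) / c = (if P then u / c else (0::real))"
  "(\<Sum>j\<in>A. if P then f j else 0) = (if P then (\<Sum>j\<in>A. f j) else (0::real))"
  by auto

lemma wmat_entries:
  "wmat x y $ (Inl i, a) $ b = (if a = b then x$i else 0)"
  "wmat x y $ (Inr j, a) $ b = (if a = b then y$j else 0)"
  by (simp_all add: wmat_def)

lemma quad_M:
  assumes "\<And>i j. symmetric_mat (Fm i j)"
  shows "(transpose (wmat x y) ** Mmat Fm ** wmat x y) $ a $ b = (\<Sum>i\<in>UNIV. \<Sum>j\<in>UNIV. (x$i * y$j) * (Fm i j $ a $ b))"
  unfolding Q_entry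
  apply (simp add: sum_blk wmat_entries Mmat_def Gamma_def transpose_def sum.distrib if0_simps cong: if_cong)
  apply (subst sum.swap[of _ UNIV UNIV])
  apply (simp add: sym_entry[OF assms] sum.distrib[symmetric])
  apply (intro sum.cong refl)
  apply (simp add: field_simps)
  done

lemma lin_Omega:
  shows "(Omega H G ** wmat x y) $ a $ b = (\<Sum>i\<in>UNIV. x$i * H i $ a $ b) + (\<Sum>j\<in>UNIV. y$j * G j $ a $ b)"
  unfolding matrix_matrix_mult_def
  by (simp add: sum_blk wmat_entries Omega_def mult.commute if0_simps cong: if_cong)

theorem theorem7:
  fixes F :: "real^'p::finite^'p"
    and H :: "'m::finite \<Rightarrow> real^'p^'p"
    and G :: "'n::finite \<Rightarrow> real^'p^'p"
    and Fm :: "'m \<Rightarrow> 'n \<Rightarrow> real^'p^'p"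
    and V D :: "real^(('m + 'n) \<times> 'p)^(('m + 'n) \<times> 'p)"
  assumes "symmetric_mat F"
    and "\<And>i. symmetric_mat (H i)"
    and "\<And>j. symmetric_mat (G j)"
    and "\<And>i j. symmetric_mat (Fm i j)"
    and "orthogonal_matrix V"
    and "\<And>r c. r \<noteq> c \<Longrightarrow> D $ r $ c = 0"
    and "Mmat Fm = transpose V ** D ** V"
  shows "(\<forall>x y. Bfun F H G Fm x y = Bplus F H G V D x y - Bminus V D x y)
     \<and> psd_convex_on UNIV (\<lambda>z. Bplus F H G V D (fst z) (snd z))
     \<and> psd_convex_on UNIV (\<lambda>z. Bminus V D (fst z) (snd z))"
proof -
  let ?w = "\<lambda>z::(real^'m) \<times> (real^'n). wmat (fst z) (snd z)"
  have Wlin: "?w (a *\<^sub>R z1 + b *\<^sub>R z2) = a *\<^sub>R ?w z1 + b *\<^sub>R ?w z2" for a b z1 z2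
    by (simp add: wmat_lin)
  have psdP: "psd (transpose V ** Dplus D ** V)"
    by (rule psd_VDV) (auto intro: Dplus_off assms(6) Dplus_diag)
  have psdM: "psd (transpose V ** Dminus D ** V)"
    by (rule psd_VDV) (auto intro: Dminus_off assms(6) Dminus_diag)
  have c1: "psd_convex_on UNIV (\<lambda>z. transpose (?w z) ** (transpose V ** Dplus D ** V) ** ?w z + (Omega H G ** ?w z + F))"
    by (rule convex_Q[OF psdP Wlin])
      (simp only: fst_add fst_scaleR snd_add snd_scaleR wmat_lin Omega_lin, simp add: algebra_simps)
  have c2: "psd_convex_on UNIV (\<lambda>z. transpose (?w z) ** (transpose V ** Dminus D ** V) ** ?w z + 0)"
    by (rule convex_Q[OF psdM Wlin]) simp
  have PM: "transpose V ** Dplus D ** V - transpose V ** Dminus D ** V = Mmat Fm"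
  proof -
    have "(transpose V ** Dplus D ** V - transpose V ** Dminus D ** V) $ a $ b = (transpose V ** D ** V) $ a $ b" for a b
      unfolding vector_minus_component Q_entry
      by (simp add: sum_subtractf[symmetric] algebra_simps Dminus_def)
    then show ?thesis using assms(7) by (simp add: vec_eq_iff)
  qed
  have part1: "Bfun F H G Fm x y = Bplus F H G V D x y - Bminus V D x y" for x y
  proof -
    have e: "Bplus F H G V D x y - Bminus V D x y = transpose (wmat x y) ** Mmat Fm ** wmat x y + Omega H G ** wmat x y + F"
    proof -
      have "transpose (wmat x y) ** Mmat Fm ** wmat x y = transpose (wmat x y) ** (transpose V ** Dplus D ** V) ** wmat x y
         - transpose (wmat x y) ** (transpose V ** Dminus D ** V) ** wmat x y"
        unfolding PM[symmetric] Q_sub ..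
      then show ?thesis unfolding Bplus_def Bminus_def by simp
    qed
    have "Bfun F H G Fm x y $ a $ b = F$a$b + (\<Sum>i\<in>UNIV. x$i * H i $ a $ b) + (\<Sum>j\<in>UNIV. y$j * G j $ a $ b)
       + (\<Sum>i\<in>UNIV. \<Sum>j\<in>UNIV. (x$i * y$j) * (Fm i j $ a $ b))" for a b
      by (simp add: Bfun_def sum_component)
    then show ?thesis unfolding e
      by (simp add: vec_eq_iff quad_M[OF assms(4)] lin_Omega)
  qed
  show ?thesis
    using part1 c1 c2 by (simp add: Bplus_def Bminus_def add.assoc)
qed

end
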